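(* Let $s,t$ be positive integers. Then $prc(K_{s,t})=\max\{s,t\}$.
   Context: $K_{s,t}$ is the complete bipartite graph with parts of sizes $s$ and $t$. A path in an edge-coloured graph is a rainbow path if its edges receive pairwise distinct colours. The proper rainbow connection number $prc(G)$ is the minimum number of colours in a proper edge-colouring (adjacent edges get distinct colours) such that every two distinct vertices are joined by a rainbow path. *)

theory Defs
  imports Main
begin

definition walk_edges :: "'a list \<Rightarrow> 'a set list" where
  "walk_edges p = map (\<lambda>(a, b). {a, b}) (zip p (tl p))"

definition is_path :: "'a set set \<Rightarrow> 'a \<Rightarrow> 'a \<Rightarrow> 'a list \<Rightarrow> bool" where
  "is_path E u v p \<longleftrightarrow> p \<noteq> [] \<and> hd p = u \<and> last p = v \<and> distinct p
     \<and> set (walk_edges p) \<subseteq> E"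

definition rainbow_path :: "'a set set \<Rightarrow> ('a set \<Rightarrow> nat) \<Rightarrow> 'a \<Rightarrow> 'a \<Rightarrow> 'a list \<Rightarrow> bool" where
  "rainbow_path E c u v p \<longleftrightarrow> is_path E u v p \<and> distinct (map c (walk_edges p))"

definition proper_edge_colouring :: "'a set set \<Rightarrow> ('a set \<Rightarrow> nat) \<Rightarrow> bool" where
  "proper_edge_colouring E c \<longleftrightarrow>
     (\<forall>e\<in>E. \<forall>f\<in>E. e \<noteq> f \<and> e \<inter> f \<noteq> {} \<longrightarrow> c e \<noteq> c f)"

definition proper_rainbow_colouring :: "'a set \<Rightarrow> 'a set set \<Rightarrow> ('a set \<Rightarrow> nat) \<Rightarrow> bool" where
  "proper_rainbow_colouring V E c \<longleftrightarrow> proper_edge_colouring E c \<and>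
     (\<forall>u\<in>V. \<forall>v\<in>V. u \<noteq> v \<longrightarrow> (\<exists>p. rainbow_path E c u v p))"

text \<open>Proper rainbow connection number: least k such that some proper rainbow
colouring uses only colours from {0..<k} (i.e. at most k colours).\<close>
definition prc :: "'a set \<Rightarrow> 'a set set \<Rightarrow> nat" where
  "prc V E = (LEAST k. \<exists>c. c ` E \<subseteq> {..<k} \<and> proper_rainbow_colouring V E c)"

definition Kbip_V :: "nat \<Rightarrow> nat \<Rightarrow> (nat + nat) set" where
  "Kbip_V s t = Inl ` {..<s} \<union> Inr ` {..<t}"

definition Kbip_E :: "nat \<Rightarrow> nat \<Rightarrow> (nat + nat) set set" where
  "Kbip_E s t = {{Inl i, Inr j} | i j. i < s \<and> j < t}"

end

theory Submission
  imports Defs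
begin

lemma mod_inj_aux:
  fixes n i a b :: nat
  assumes "a < n" "b < n" "a \<noteq> b"
  shows "(i + a) mod n \<noteq> (i + b) mod n"
proof
  assume h: "(i + a) mod n = (i + b) mod n"
  hence "a mod n = b mod n"
    by (simp add: nat_mod_eq_iff)
  thus False using assms by simp
qed

definition cK :: "nat \<Rightarrow> (nat + nat) set \<Rightarrow> nat" where
  "cK n e = (\<Sum>x\<in>e. case_sum id id x) mod n"

lemma cK_val: "cK n {Inl i, Inr j} = (i + j) mod n"
  unfolding cK_def by simp

lemma Kmem: "i < s \<Longrightarrow> j < t \<Longrightarrow> {Inl i, Inr j} \<in> Kbip_E s t"
  unfolding Kbip_E_def mem_Collect_eq by (rule exI[of _ i], rule exI[of _ j]) simp

lemma Kelim: "e \<in> Kbip_E s t \<Longrightarrow> \<exists>i j. e = {Inl i, Inr j} \<and> i < s \<and> j < t"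
  unfolding Kbip_E_def by simp

lemma properD: "proper_edge_colouring E c \<Longrightarrow> e \<in> E \<Longrightarrow> f \<in> E \<Longrightarrow> e \<noteq> f \<Longrightarrow> e \<inter> f \<noteq> {} \<Longrightarrow> c e \<noteq> c f"
  unfolding proper_edge_colouring_def by blast

lemma lower:
  assumes "c ` Kbip_E s t \<subseteq> {..<k}" "proper_edge_colouring (Kbip_E s t) c"
    and "0 < s" "0 < t"
  shows "max s t \<le> k"
proof -
  have inj: "inj_on (\<lambda>j. c {Inl 0, Inr j}) {..<t}"
  proof (rule inj_onI, rule ccontr)
    fix j j' assume j: "j \<in> {..<t}" "j' \<in> {..<t}" "c {Inl 0, Inr j} = c {Inl 0, Inr j'}" "j \<noteq> j'"
    have m: "{Inl 0, Inr j} \<in> Kbip_E s t" "{Inl 0, Inr j'} \<in> Kbip_E s t"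
      using j assms(3) Kmem by auto
    have ne: "{Inl 0, Inr j} \<noteq> ({Inl 0, Inr j'} :: (nat+nat) set)"
      using j(4) by (auto simp: doubleton_eq_iff)
    have "{Inl 0, Inr j} \<inter> ({Inl 0, Inr j'} :: (nat+nat) set) \<noteq> {}" by simp
    from properD[OF assms(2) m ne this] j(3) show False by simp
  qed
  have sub: "(\<lambda>j. c {Inl 0, Inr j}) ` {..<t} \<subseteq> {..<k}"
  proof
    fix x assume "x \<in> (\<lambda>j. c {Inl 0, Inr j}) ` {..<t}"
    then obtain j where "j < t" "x = c {Inl 0, Inr j}" by auto
    thus "x \<in> {..<k}" using assms(1,3) Kmem[of 0 s j t] by auto
  qed
  have t: "t \<le> k" using card_inj_on_le[OF inj sub] by simp
  have inj2: "inj_on (\<lambda>i. c {Inl i, Inr 0}) {..<s}"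
  proof (rule inj_onI, rule ccontr)
    fix j j' assume j: "j \<in> {..<s}" "j' \<in> {..<s}" "c {Inl j, Inr 0} = c {Inl j', Inr 0}" "j \<noteq> j'"
    have m: "{Inl j, Inr 0} \<in> Kbip_E s t" "{Inl j', Inr 0} \<in> Kbip_E s t"
      using j assms(4) Kmem by auto
    have ne: "{Inl j, Inr 0} \<noteq> ({Inl j', Inr 0} :: (nat+nat) set)"
      using j(4) by (auto simp: doubleton_eq_iff)
    have "{Inl j, Inr 0} \<inter> ({Inl j', Inr 0} :: (nat+nat) set) \<noteq> {}" by simp
    from properD[OF assms(2) m ne this] j(3) show False by simp
  qed
  have sub2: "(\<lambda>i. c {Inl i, Inr 0}) ` {..<s} \<subseteq> {..<k}"
  proof
    fix x assume "x \<in> (\<lambda>i. c {Inl i, Inr 0}) ` {..<s}"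
    then obtain i where "i < s" "x = c {Inl i, Inr 0}" by auto
    thus "x \<in> {..<k}" using assms(1,4) Kmem[of i s 0 t] by auto
  qed
  have s: "s \<le> k" using card_inj_on_le[OF inj2 sub2] by simp
  show ?thesis using s t by simp
qed

lemma path2:
  assumes "proper_edge_colouring E c" "{u,w} \<in> E" "{w,v} \<in> E" "u \<noteq> v" "u \<noteq> w" "w \<noteq> v"
  shows "rainbow_path E c u v [u,w,v]"
proof -
  have "{u,w} \<noteq> {w,v}" using assms(4-6) by (auto simp: doubleton_eq_iff)
  have "{u,w} \<inter> {w,v} \<noteq> {}" by simp
  from properD[OF assms(1-3) \<open>{u,w} \<noteq> {w,v}\<close> this] have "c {u,w} \<noteq> c {w,v}" .
  thus ?thesis using assms unfolding rainbow_path_def is_path_def walk_edges_def by simp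
qed

lemma path1:
  assumes "{u,v} \<in> E" "u \<noteq> v"
  shows "rainbow_path E c u v [u,v]"
  using assms unfolding rainbow_path_def is_path_def walk_edges_def by simp

lemma upper:
  assumes "0 < s" "0 < t"
  shows "proper_rainbow_colouring (Kbip_V s t) (Kbip_E s t) (cK (max s t))"
proof -
  let ?n = "max s t" and ?E = "Kbip_E s t"
  have pr: "proper_edge_colouring ?E (cK ?n)"
    unfolding proper_edge_colouring_def
  proof (intro ballI impI)
    fix e f assume e: "e \<in> ?E" "f \<in> ?E" "e \<noteq> f \<and> e \<inter> f \<noteq> {}"
    obtain i j where ij: "e = {Inl i, Inr j}" "i < s" "j < t" using Kelim[OF e(1)] by blast
    obtain i' j' where ij': "f = {Inl i', Inr j'}" "i' < s" "j' < t" using Kelim[OF e(2)] by blast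
    have "(i = i' \<and> j \<noteq> j') \<or> (j = j' \<and> i \<noteq> i')" using e(3) ij ij' by auto
    thus "cK ?n e \<noteq> cK ?n f"
    proof
      assume "i = i' \<and> j \<noteq> j'"
      thus ?thesis using ij ij' mod_inj_aux[of j ?n j' i] by (simp add: cK_val)
    next
      assume "j = j' \<and> i \<noteq> i'"
      thus ?thesis using ij ij' mod_inj_aux[of i ?n i' j] by (simp add: cK_val add.commute)
    qed
  qed
  have E: "\<And>i j. i < s \<Longrightarrow> j < t \<Longrightarrow> {Inl i, Inr j} \<in> ?E"
    by (rule Kmem)
  have E': "\<And>i j. i < s \<Longrightarrow> j < t \<Longrightarrow> {Inr j, Inl i} \<in> ?E"
    using E by (metis insert_commute)
  have conn: "\<exists>p. rainbow_path ?E (cK ?n) u v p" if uv: "u \<in> Kbip_V s t" "v \<in> Kbip_V s t" "u \<noteq> v" for u v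
  proof -
    consider (a) i i' where "u = Inl i" "v = Inl i'" "i < s" "i' < s"
      | (b) i j where "u = Inl i" "v = Inr j" "i < s" "j < t"
      | (c) i j where "u = Inr j" "v = Inl i" "i < s" "j < t"
      | (d) j j' where "u = Inr j" "v = Inr j'" "j < t" "j' < t"
      using uv(1,2) unfolding Kbip_V_def by (auto simp: image_iff)
    thus ?thesis
    proof cases
      case a thus ?thesis using path2[OF pr, of u "Inr 0" v] E E' assms uv by auto
    next
      case b thus ?thesis using path1[of u v ?E] E uv by auto
    next
      case c thus ?thesis using path1[of u v ?E] E' uv by auto
    next
      case d thus ?thesis using path2[OF pr, of u "Inl 0" v] E E' assms uv by auto
    qed
  qed
  show ?thesis unfolding proper_rainbow_colouring_def using pr conn by blast
qed

theorem theorem5p3: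
  fixes s t :: nat
  assumes "0 < s" and "0 < t"
  shows "prc (Kbip_V s t) (Kbip_E s t) = max s t"
  unfolding prc_def
proof (rule Least_equality)
  have "cK (max s t) ` Kbip_E s t \<subseteq> {..<max s t}"
  proof
    fix x assume "x \<in> cK (max s t) ` Kbip_E s t"
    then obtain i j where "x = cK (max s t) {Inl i, Inr j}" using Kelim by blast
    thus "x \<in> {..<max s t}" using assms by (simp add: cK_val)
  qed
  thus "\<exists>c. c ` Kbip_E s t \<subseteq> {..<max s t} \<and> proper_rainbow_colouring (Kbip_V s t) (Kbip_E s t) c"
    using upper[OF assms] by blast
next
  fix k assume "\<exists>c. c ` Kbip_E s t \<subseteq> {..<k} \<and> proper_rainbow_colouring (Kbip_V s t) (Kbip_E s t) c"
  thus "max s t \<le> k" using lower assms unfolding proper_rainbow_colouring_def by blast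
qed

end
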